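(* Let $q\in[0,1)$, $t\in(0,1)$, and $\Omega_n=\{\lambda \text{ partition}:\ell(\lambda)\le n\}$, where $\ell(\lambda)$ is the number of nonzero parts. Define $\eta_n(\lambda)=\ell(\lambda)-n$ and $\phi_{n,x}(\lambda)=\prod_{j\ge0}\frac{1+q^{\lambda_{n-j}}t^{j+x}}{1+t^{j+x}}$ for $x\in\mathbb R$, with the convention $q^{\lambda_{-m}}=0$ for $m\ge0$ (and $q^0=1$, including when $q=0$). Then, for every choice of probability measures on the sets $\Omega_n$, the functions $\eta_n,\phi_{n,x}$ satisfy conditions (1)–(4) below (pointwise on $\Omega_n$), and consequently $\{\ell(\lambda)-n\}_{n\ge1}$ and $\{F_n(x)=\mathbb E\prod_{j\ge0}\frac{1+q^{\lambda_{n-j}}t^{j+x}}{1+t^{j+x}}\}_{n\ge1}$ are asymptotically equivalent as $n\to\infty$. Conditions: (1) $0\le\phi_{n,x}\le\phi_{n,y}\le1$ for $x\le y$; (2) for every $\varepsilon>0$ there is $M$ with $\phi_{n,x}<\varepsilon$ whenever $\eta_n-x>M$ (uniformly in $n,x$); (3) for every $\varepsilon>0$ there is $M$ with $\phi_{n,x}>1-\varepsilon$ whenever $\eta_n-x<-M$ (uniformly in $n,x$); (4) there is $c>0$ independent of $n$ with $\phi_{n,x+1}-\phi_{n,x}\ge c$ whenever $x<\eta_n\le x+1$.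
   Context: A sequence $\{\eta_n\}_{n\ge1}$ of real random variables spreads if $\lim_{n\to\infty}\sup_{x\in\mathbb R}\mathrm{Prob}\{x<\eta_n\le x+1\}=0$. A sequence $\{F_n\}_{n\ge1}$ of non-decreasing functions $\mathbb R\to\mathbb R$ spreads if $\lim_{n\to\infty}\sup_{x\in\mathbb R}(F_n(x+1)-F_n(x))=0$. A sequence of real random variables $\{\eta_n\}$ and a sequence of non-decreasing functions $\{F_n\}$ are asymptotically equivalent if (i) $\{\eta_n\}$ spreads if and only if $\{F_n\}$ spreads, and (ii) when both spread, $\lim_{n\to\infty}\sup_{x\in\mathbb R}(\mathrm{Prob}\{\eta_n\le x\}-F_n(x))=0$. *)

theory Defs
  imports "HOL-Probability.Probability"
begin

text \<open>Partitions are represented as functions nat => nat, lambda i = i-th part (i >= 1),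
  with lambda 0 = 0 as a normalisation.  Omega_n = partitions with at most n nonzero parts.\<close>

definition partitions_le :: "nat \<Rightarrow> (nat \<Rightarrow> nat) set" where
  "partitions_le n = {lam. lam 0 = 0 \<and> (\<forall>i j. 1 \<le> i \<and> i \<le> j \<longrightarrow> lam j \<le> lam i)
                          \<and> (\<forall>i. n < i \<longrightarrow> lam i = 0)}"

definition part_length :: "(nat \<Rightarrow> nat) \<Rightarrow> nat" where
  "part_length lam = card {i. 1 \<le> i \<and> lam i \<noteq> 0}"

definition eta :: "nat \<Rightarrow> (nat \<Rightarrow> nat) \<Rightarrow> real" where
  "eta n lam = real (part_length lam) - real n"

definition phi :: "real \<Rightarrow> real \<Rightarrow> nat \<Rightarrow> real \<Rightarrow> (nat \<Rightarrow> nat) \<Rightarrow> real" where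
  "phi q t n x lam = (\<Prod>j. (1 + (if j < n then q ^ lam (n - j) else 0) * t powr (real j + x))
                            / (1 + t powr (real j + x)))"

definition spreads_rv :: "(nat \<Rightarrow> 'a pmf) \<Rightarrow> (nat \<Rightarrow> 'a \<Rightarrow> real) \<Rightarrow> bool" where
  "spreads_rv P X \<longleftrightarrow>
     (\<lambda>n. SUP x::real. measure_pmf.prob (P n) {w. x < X n w \<and> X n w \<le> x + 1}) \<longlonglongrightarrow> 0"

definition spreads_fun :: "(nat \<Rightarrow> real \<Rightarrow> real) \<Rightarrow> bool" where
  "spreads_fun F \<longleftrightarrow> (\<lambda>n. SUP x::real. F n (x + 1) - F n x) \<longlonglongrightarrow> 0"

definition asymp_equivalent :: "(nat \<Rightarrow> 'a pmf) \<Rightarrow> (nat \<Rightarrow> 'a \<Rightarrow> real) \<Rightarrow> (nat \<Rightarrow> real \<Rightarrow> real) \<Rightarrow> bool" where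
  "asymp_equivalent P X F \<longleftrightarrow>
     (spreads_rv P X \<longleftrightarrow> spreads_fun F) \<and>
     (spreads_rv P X \<and> spreads_fun F \<longrightarrow>
        (\<lambda>n. SUP x::real. measure_pmf.prob (P n) {w. X n w \<le> x} - F n x) \<longlonglongrightarrow> 0)"

end

theory Submission
  imports Defs
begin



definition hh :: "real \<Rightarrow> real \<Rightarrow> real \<Rightarrow> real" where
  "hh t a e = (1 + a * t powr e) / (1 + t powr e)"

definition Psi :: "real \<Rightarrow> (nat \<Rightarrow> real) \<Rightarrow> real \<Rightarrow> real" where
  "Psi t b y = (\<Prod>k. hh t (b k) (real k + y))"

lemma tp: "0 < t \<Longrightarrow> 0 < t powr (e::real)" by simp

lemma tp1: "0 < t \<Longrightarrow> 0 < 1 + t powr (e::real)" using tp[of t e] by linarith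

lemma hh_alt: "0 < t \<Longrightarrow> hh t a e = a + (1 - a) / (1 + t powr e)"
proof -
  assume "0 < t"
  then have "1 + t powr e > 0" by (simp add: add_pos_nonneg)
  then show ?thesis unfolding hh_def by (simp add: field_simps)
qed

lemma hh_pos: "0 < t \<Longrightarrow> 0 \<le> a \<Longrightarrow> 0 < hh t a e"
  unfolding hh_def by (intro divide_pos_pos add_pos_nonneg) auto

lemma hh_le1: "0 < t \<Longrightarrow> a \<le> 1 \<Longrightarrow> hh t a e \<le> 1"
proof -
  assume "0 < t" "a \<le> 1"
  have "a * t powr e \<le> 1 * t powr e" using \<open>a \<le> 1\<close> by (intro mult_right_mono) auto
  then show ?thesis unfolding hh_def using tp1[OF \<open>0<t\<close>, of e] by (subst divide_le_eq_1) auto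
qed

lemma hh_ge: "0 < t \<Longrightarrow> 0 \<le> a \<Longrightarrow> 1 - t powr e \<le> hh t a e"
proof -
  assume t: "0 < t" and a: "0 \<le> a"
  define s where "s = t powr e"
  have s: "s > 0" using t by (simp add: s_def)
  have "1 - s \<le> 1 / (1 + s)" using s by (simp add: field_simps)
  also have "\<dots> \<le> (1 + a * s) / (1 + s)" using a s by (intro divide_right_mono) auto
  finally show ?thesis unfolding hh_def s_def .
qed

lemma hh_mono: "0 < t \<Longrightarrow> t < 1 \<Longrightarrow> a \<le> 1 \<Longrightarrow> e \<le> e' \<Longrightarrow> hh t a e \<le> hh t a e'"
proof -
  assume t: "0 < t" "t < 1" and a: "a \<le> 1" and e: "e \<le> e'"
  have "t powr e' \<le> t powr e" using e t by (intro powr_mono') auto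
  then have "(1 - a) / (1 + t powr e) \<le> (1 - a) / (1 + t powr e')"
    using a t by (intro divide_left_mono mult_pos_pos add_pos_nonneg) auto
  then show ?thesis using t by (simp add: hh_alt)
qed

lemma hh_one: "0 < t \<Longrightarrow> hh t 1 e = 1"
  using tp1[of t e] unfolding hh_def by simp

lemma hh_neg: "0 < t \<Longrightarrow> t < 1 \<Longrightarrow> 0 \<le> a \<Longrightarrow> a \<le> q \<Longrightarrow> q \<le> 1 \<Longrightarrow> e \<le> 0 \<Longrightarrow> hh t a e \<le> (1 + q) / 2"
proof -
  assume t: "0 < t" "t < 1" and a: "0 \<le> a" "a \<le> q" "q \<le> 1" and e: "e \<le> 0"
  have "t powr 0 \<le> t powr e" using e t by (intro powr_mono') auto
  then have s: "1 \<le> t powr e" using t by simp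
  have "(1 - a) / (1 + t powr e) \<le> (1 - a) / 2" if "a \<le> 1"
    using s that by (intro divide_left_mono) auto
  then show ?thesis using a t by (auto simp: hh_alt)
qed

lemma hh_half: "0 < t \<Longrightarrow> t < 1 \<Longrightarrow> 0 \<le> a \<Longrightarrow> 0 \<le> e \<Longrightarrow> hh t a e \<ge> 1/2"
proof -
  assume t: "0 < t" "t < 1" and a: "0 \<le> a" and e: "0 \<le> e"
  have "t powr e \<le> t powr 0" using e t by (intro powr_mono') auto
  then have s: "t powr e \<le> 1" using t by simp
  have "1/2 \<le> 1 / (1 + t powr e)" using s tp1[of t e] t by (intro frac_le) auto
  also have "\<dots> \<le> (1 + a * t powr e) / (1 + t powr e)" using a t
    by (intro divide_right_mono) auto
  finally show ?thesis unfolding hh_def .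
qed

lemma hh_step:
  assumes t: "0 < t" "t < 1" and a: "0 \<le> a" "a \<le> q" "q < 1" and y: "-1 \<le> y" "y < 0"
  shows "hh t a (y + 1) - hh t a y \<ge> (1 - q) * (1 - t) / (2 * (1 + 1 / t))"
proof -
  define s where "s = t powr y"
  have s1: "1 \<le> s" using powr_mono'[of y 0 t] y t by (simp add: s_def)
  have tm: "t powr (-1) = 1 / t" using t by (simp add: powr_minus_divide)
  have s2: "s \<le> 1 / t" using powr_mono'[of "-1" y t] y t unfolding s_def tm by simp
  have u: "t powr (y + 1) = t * s" using t by (simp add: s_def powr_add)
  have p1: "1 + t * s > 0" "1 + s > 0" using t s1 by (auto intro: add_pos_nonneg)
  have h1: "hh t a (y + 1) = a + (1 - a) / (1 + t * s)" by (simp only: hh_alt[OF t(1)] u)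
  have h2: "hh t a y = a + (1 - a) / (1 + s)" by (simp only: hh_alt[OF t(1)] s_def)
  have "hh t a (y + 1) - hh t a y = (1 - a) * (1 / (1 + t * s) - 1 / (1 + s))"
    unfolding h1 h2 by (simp add: right_diff_distrib)
  also have "1 / (1 + t * s) - 1 / (1 + s) = (s - t * s) / ((1 + t * s) * (1 + s))"
    using p1 by (simp add: field_simps)
  finally have eq: "hh t a (y + 1) - hh t a y = (1 - a) * (s - t * s) / ((1 + t * s) * (1 + s))"
    by simp
  have ts: "t * s \<le> 1" using s2 t by (simp add: field_simps)
  have "(1 - t) * 1 \<le> (1 - t) * s" by (rule mult_left_mono) (use s1 t in auto)
  then have st: "1 - t \<le> s - t * s" by (simp add: algebra_simps)
  have num: "(1 - q) * (1 - t) \<le> (1 - a) * (s - t * s)"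
    by (rule mult_mono) (use a s1 t st in auto)
  have den: "(1 + t * s) * (1 + s) \<le> 2 * (1 + 1 / t)"
    by (rule mult_mono) (use ts s2 t s1 in auto)
  have "(1 - q) * (1 - t) / (2 * (1 + 1 / t)) \<le> (1 - a) * (s - t * s) / ((1 + t * s) * (1 + s))"
    by (rule frac_le[OF _ num _ den]) (use p1 a s1 st t in auto)
  then show ?thesis using eq by simp
qed




context
  fixes t :: real
  assumes t0: "0 < t" and t1: "t < 1"
begin

lemma tpow_split: "t powr (real k + y) = t powr y * t ^ k"
  using t0 by (simp add: powr_add powr_realpow mult.commute)

lemma Psi_conv:
  assumes b: "\<And>k. 0 \<le> b k \<and> b k \<le> 1"
  shows "convergent_prod (\<lambda>k. hh t (b k) (real k + y))"
proof -
  define z where "z k = hh t (b k) (real k + y) - 1" for k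
  have zb: "\<bar>z k\<bar> \<le> t powr y * t ^ k" for k
  proof -
    have "hh t (b k) (real k + y) \<le> 1" using hh_le1[OF t0] b by auto
    moreover have "1 - t powr (real k + y) \<le> hh t (b k) (real k + y)" using hh_ge[OF t0] b by auto
    ultimately show ?thesis unfolding z_def tpow_split by auto
  qed
  have "summable (\<lambda>k. t powr y * t ^ k)"
    by (rule summable_mult) (rule summable_geometric, use t0 t1 in auto)
  then have "summable (\<lambda>k. \<bar>z k\<bar>)"
    by (rule summable_comparison_test[rotated]) (use zb in auto)
  moreover have "z k \<noteq> -1" for k
  proof -
    have "0 < hh t (b k) (real k + y)" using hh_pos[OF t0] b by auto
    then show ?thesis unfolding z_def by simp
  qed
  ultimately have "convergent_prod (\<lambda>k. 1 + z k)" by (rule summable_imp_convergent_prod_real)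
  then show ?thesis unfolding z_def by simp
qed

lemma Psi_has:
  assumes b: "\<And>k. 0 \<le> b k \<and> b k \<le> 1"
  shows "(\<lambda>k. hh t (b k) (real k + y)) has_prod Psi t b y"
  unfolding Psi_def using Psi_conv[OF b] by (rule convergent_prod_has_prod)

lemma Psi_le1:
  assumes b: "\<And>k. 0 \<le> b k \<and> b k \<le> 1"
  shows "Psi t b y \<le> 1"
proof -
  have "prod (\<lambda>k. hh t (b k) (real k + y)) {..<0} \<ge> (\<Prod>k. hh t (b k) (real k + y))"
    by (rule prod_ge_prodinf[OF Psi_has[OF b]])
       (use hh_le1[OF t0] hh_pos[OF t0] b in \<open>auto intro: less_imp_le\<close>)
  then show ?thesis unfolding Psi_def by simp
qed

lemma Psi_nonneg:
  assumes b: "\<And>k. 0 \<le> b k \<and> b k \<le> 1"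
  shows "0 \<le> Psi t b y"
  by (rule has_prod_nonneg[OF Psi_has[OF b]]) (use hh_pos[OF t0] b in \<open>auto intro: less_imp_le\<close>)

lemma Psi_mono:
  assumes b: "\<And>k. 0 \<le> b k \<and> b k \<le> 1" and yy: "y \<le> y'"
  shows "Psi t b y \<le> Psi t b y'"
  unfolding Psi_def
  by (rule prodinf_le[OF Psi_has[OF b] Psi_has[OF b]])
     (use hh_pos[OF t0] b hh_mono[OF t0 t1] yy in \<open>auto intro: less_imp_le\<close>)

lemma Psi_head:
  assumes b: "\<And>k. 0 \<le> b k \<and> b k \<le> 1"
  shows "Psi t b y = hh t (b 0) y * Psi t (\<lambda>k. b (Suc k)) (y + 1)"
proof -
  have "(\<Prod>k. hh t (b (Suc k)) (real (Suc k) + y)) = Psi t b y / hh t (b 0) (real 0 + y)"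
    unfolding Psi_def
  proof (rule prodinf_split_head[OF Psi_conv[OF b]])
    have "0 < hh t (b 0) (real 0 + y)" using hh_pos[OF t0] b by auto
    then show "hh t (b 0) (real 0 + y) \<noteq> 0" by simp
  qed
  moreover have "(\<lambda>k. hh t (b (Suc k)) (real (Suc k) + y)) = (\<lambda>k. hh t (b (Suc k)) (real k + (y + 1)))"
    by (simp add: algebra_simps)
  ultimately have "Psi t (\<lambda>k. b (Suc k)) (y + 1) = Psi t b y / hh t (b 0) y"
    unfolding Psi_def by simp
  moreover have "0 < hh t (b 0) y" using hh_pos[OF t0] b by auto
  ultimately show ?thesis by simp
qed

lemma Psi_lower:
  assumes b: "\<And>k. 0 \<le> b k \<and> b k \<le> 1" and y: "0 \<le> y"
  shows "1 - t powr y / (1 - t) \<le> Psi t b y"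
proof -
  have "\<exists>N. \<forall>n\<ge>N. 1 - t powr y / (1 - t) \<le> (\<Prod>k\<le>n. hh t (b k) (real k + y))"
  proof (intro exI allI impI)
    fix n :: nat
    have le1: "t powr (real k + y) \<le> 1" for k
      using powr_mono'[of 0 "real k + y" t] y t0 t1 by simp
    have "(\<Prod>k\<le>n. 1 - t powr (real k + y)) \<le> (\<Prod>k\<le>n. hh t (b k) (real k + y))"
      by (rule prod_mono) (use le1 hh_ge[OF t0] b in auto)
    moreover have "1 - (\<Sum>k\<le>n. t powr (real k + y)) \<le> (\<Prod>k\<le>n. 1 - t powr (real k + y))"
      by (rule Weierstrass_prod_ineq) (use le1 t0 in auto)
    moreover have "(\<Sum>k\<le>n. t powr (real k + y)) \<le> t powr y / (1 - t)"
    proof -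
      have sm: "summable (\<lambda>k. t powr y * t ^ k)"
        by (rule summable_mult) (rule summable_geometric, use t0 t1 in auto)
      have "(\<Sum>k\<le>n. t powr y * t ^ k) \<le> (\<Sum>k. t powr y * t ^ k)"
        by (rule sum_le_suminf[OF sm]) (use t0 in auto)
      also have "\<dots> = t powr y * (1 / (1 - t))"
        using suminf_mult[OF summable_geometric, of t "t powr y"] suminf_geometric[of t] t0 t1 by simp
      finally show ?thesis unfolding tpow_split by simp
    qed
    ultimately show "1 - t powr y / (1 - t) \<le> (\<Prod>k\<le>n. hh t (b k) (real k + y))" by linarith
  qed
  then show ?thesis unfolding Psi_def
    by (rule LIMSEQ_le_const[OF convergent_prod_LIMSEQ[OF Psi_conv[OF b]]])
qed

lemma Psi_pos_aux:
  assumes K: "t ^ K / (1 - t) \<le> 1/2"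
  shows "\<forall>b z. (\<forall>k. 0 \<le> b k \<and> b k \<le> 1) \<longrightarrow> 0 \<le> z \<longrightarrow> real K \<le> z + real m
           \<longrightarrow> (1/2) ^ (m + 1) \<le> Psi t b z"
proof (induction m)
  case 0
  show ?case
  proof (intro allI impI)
    fix b :: "nat \<Rightarrow> real" and z :: real
    assume b: "\<forall>k. 0 \<le> b k \<and> b k \<le> 1" and z: "0 \<le> z" "real K \<le> z + real 0"
    have "t powr z \<le> t powr real K" using powr_mono'[of "real K" z t] z t0 t1 by simp
    then have "t powr z \<le> t ^ K" using t0 by (simp add: powr_realpow)
    then have "t powr z / (1 - t) \<le> t ^ K / (1 - t)" using t1 by (intro divide_right_mono) auto
    then have "1/2 \<le> 1 - t powr z / (1 - t)" using K by linarith
    also have "\<dots> \<le> Psi t b z" using Psi_lower[of b z] b z by auto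
    finally show "(1/2) ^ (0 + 1) \<le> Psi t b z" by simp
  qed
next
  case (Suc m)
  show ?case
  proof (intro allI impI)
    fix b :: "nat \<Rightarrow> real" and z :: real
    assume b: "\<forall>k. 0 \<le> b k \<and> b k \<le> 1" and z: "0 \<le> z" "real K \<le> z + real (Suc m)"
    have IH: "(1/2) ^ (m + 1) \<le> Psi t (\<lambda>k. b (Suc k)) (z + 1)"
      using Suc.IH z b by auto
    have h: "1/2 \<le> hh t (b 0) z" using hh_half[OF t0 t1] b z by auto
    have "(1/2) * (1/2) ^ (m + 1) \<le> hh t (b 0) z * Psi t (\<lambda>k. b (Suc k)) (z + 1)"
      by (rule mult_mono[OF h IH]) (use hh_pos[OF t0, of "b 0" z] b in auto)
    also have "\<dots> = Psi t b z" using Psi_head[of b z] b by auto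
    finally show "(1/2) ^ (Suc m + 1) \<le> Psi t b z" by simp
  qed
qed

lemma Psi_pos_const:
  "\<exists>C>0. \<forall>b z. (\<forall>k. 0 \<le> b k \<and> b k \<le> 1) \<longrightarrow> 0 \<le> z \<longrightarrow> C \<le> Psi t b z"
proof -
  obtain K where K: "t ^ K < (1 - t) / 2" using real_arch_pow_inv[of "(1 - t)/2" t] t1 by auto
  then have K': "t ^ K / (1 - t) \<le> 1/2" using t1 by (simp add: field_simps)
  show ?thesis
  proof (intro exI conjI allI impI)
    show "(0::real) < (1/2) ^ (K + 1)" by simp
    fix b :: "nat \<Rightarrow> real" and z :: real
    assume "\<forall>k. 0 \<le> b k \<and> b k \<le> 1" "0 \<le> z"
    then show "(1/2) ^ (K + 1) \<le> Psi t b z" using Psi_pos_aux[OF K', of K] by auto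
  qed
qed

lemma Psi_small_aux:
  assumes q: "0 \<le> q" "q < 1"
  shows "\<forall>b y. (\<forall>k. 0 \<le> b k \<and> b k \<le> q) \<longrightarrow> y + real m \<le> 0
           \<longrightarrow> Psi t b y \<le> ((1 + q) / 2) ^ m"
proof (induction m)
  case 0
  show ?case
  proof (intro allI impI)
    fix b :: "nat \<Rightarrow> real" and y :: real
    assume b: "\<forall>k. 0 \<le> b k \<and> b k \<le> q"
    have b1: "\<And>k. 0 \<le> b k \<and> b k \<le> 1" using b q by (meson less_imp_le order_trans)
    show "Psi t b y \<le> ((1 + q) / 2) ^ 0" using Psi_le1[OF b1] by simp
  qed
next
  case (Suc m)
  show ?case
  proof (intro allI impI)
    fix b :: "nat \<Rightarrow> real" and y :: real
    assume b: "\<forall>k. 0 \<le> b k \<and> b k \<le> q" and y: "y + real (Suc m) \<le> 0"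
    have b1: "\<And>k. 0 \<le> b k \<and> b k \<le> 1" using b q by (meson less_imp_le order_trans)
    have IH: "Psi t (\<lambda>k. b (Suc k)) (y + 1) \<le> ((1 + q) / 2) ^ m"
      using Suc.IH y b by auto
    have h: "hh t (b 0) y \<le> (1 + q) / 2" using hh_neg[OF t0 t1, of "b 0" q y] b y q by auto
    have "Psi t b y = hh t (b 0) y * Psi t (\<lambda>k. b (Suc k)) (y + 1)" using Psi_head[OF b1] .
    also have "\<dots> \<le> (1 + q) / 2 * ((1 + q) / 2) ^ m"
      by (rule mult_mono[OF h IH]) (use q Psi_nonneg b1 in auto)
    finally show "Psi t b y \<le> ((1 + q) / 2) ^ Suc m" by simp
  qed
qed

end




context
  fixes t :: real
  assumes t0: "0 < t" and t1: "t < 1"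
begin

lemma Psi_small:
  assumes q: "0 \<le> q" "q < 1" and e: "0 < \<epsilon>"
  shows "\<exists>M. \<forall>b y. (\<forall>k. 0 \<le> b k \<and> b k \<le> q) \<longrightarrow> y < - M \<longrightarrow> Psi t b y < \<epsilon>"
proof -
  obtain m where m: "((1 + q) / 2) ^ m < \<epsilon>" using real_arch_pow_inv[of \<epsilon> "(1 + q) / 2"] e q by auto
  show ?thesis
  proof (intro exI allI impI)
    fix b :: "nat \<Rightarrow> real" and y :: real
    assume b: "\<forall>k. 0 \<le> b k \<and> b k \<le> q" and y: "y < - real m"
    have "Psi t b y \<le> ((1 + q) / 2) ^ m" using Psi_small_aux[OF t0 t1 q, of m] b y by auto
    then show "Psi t b y < \<epsilon>" using m by linarith
  qed
qed

lemma Psi_big: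
  assumes e: "0 < \<epsilon>"
  shows "\<exists>M. \<forall>b y. (\<forall>k. 0 \<le> b k \<and> b k \<le> 1) \<longrightarrow> y > M \<longrightarrow> Psi t b y > 1 - \<epsilon>"
proof -
  obtain m where m: "t ^ m < \<epsilon> * (1 - t)" using real_arch_pow_inv[of "\<epsilon> * (1 - t)" t] e t1 by auto
  show ?thesis
  proof (intro exI allI impI)
    fix b :: "nat \<Rightarrow> real" and y :: real
    assume b: "\<forall>k. 0 \<le> b k \<and> b k \<le> 1" and y: "y > real m"
    have "t powr y \<le> t powr real m" using powr_mono'[of "real m" y t] y t0 t1 by simp
    then have "t powr y < \<epsilon> * (1 - t)" using m t0 by (simp add: powr_realpow)
    then have "t powr y / (1 - t) < \<epsilon>" using t1 by (simp add: field_simps)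
    moreover have "1 - t powr y / (1 - t) \<le> Psi t b y" using Psi_lower[OF t0 t1, of b y] b y by auto
    ultimately show "Psi t b y > 1 - \<epsilon>" by linarith
  qed
qed

lemma Psi_jump:
  assumes q: "0 \<le> q" "q < 1"
  shows "\<exists>c>0. \<forall>b y. (\<forall>k. 0 \<le> b k \<and> b k \<le> q) \<longrightarrow> -1 \<le> y \<longrightarrow> y < 0 \<longrightarrow>
           Psi t b (y + 1) - Psi t b y \<ge> c"
proof -
  obtain C where C: "C > 0" "\<forall>b z. (\<forall>k. 0 \<le> b k \<and> b k \<le> 1) \<longrightarrow> 0 \<le> z \<longrightarrow> C \<le> Psi t b z"
    using Psi_pos_const[OF t0 t1] by blast
  define \<delta> where "\<delta> = (1 - q) * (1 - t) / (2 * (1 + 1 / t))"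
  have d0: "\<delta> > 0" unfolding \<delta>_def using q t0 t1 by (intro divide_pos_pos mult_pos_pos add_pos_pos) auto
  show ?thesis
  proof (intro exI conjI allI impI)
    show "\<delta> * C > 0" using d0 C by simp
    fix b :: "nat \<Rightarrow> real" and y :: real
    assume b: "\<forall>k. 0 \<le> b k \<and> b k \<le> q" and y: "-1 \<le> y" "y < 0"
    have b1: "\<And>k. 0 \<le> b k \<and> b k \<le> 1" using b q by (meson less_imp_le order_trans)
    have sb1: "\<forall>k. 0 \<le> b (Suc k) \<and> b (Suc k) \<le> 1" using b1 by auto
    define R where "R = Psi t (\<lambda>k. b (Suc k)) (y + 1 + 1)"
    have R: "C \<le> R" unfolding R_def using C(2) sb1 y by auto
    have e1: "Psi t b (y + 1) = hh t (b 0) (y + 1) * R" unfolding R_def using Psi_head[OF t0 t1 b1] .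
    have "Psi t b y = hh t (b 0) y * Psi t (\<lambda>k. b (Suc k)) (y + 1)" using Psi_head[OF t0 t1 b1] .
    also have "\<dots> \<le> hh t (b 0) y * R" unfolding R_def
      by (rule mult_left_mono[OF Psi_mono[OF t0 t1]]) (use sb1 hh_pos[OF t0] b1 in \<open>auto intro: less_imp_le\<close>)
    finally have e2: "Psi t b y \<le> hh t (b 0) y * R" .
    have hs: "hh t (b 0) (y + 1) - hh t (b 0) y \<ge> \<delta>"
      unfolding \<delta>_def using hh_step[OF t0 t1, of "b 0" q y] b q y by auto
    have "\<delta> * C \<le> (hh t (b 0) (y + 1) - hh t (b 0) y) * R"
      by (rule mult_mono[OF hs R]) (use d0 C hs in auto)
    also have "\<dots> \<le> Psi t b (y + 1) - Psi t b y" using e1 e2 by (simp add: algebra_simps)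
    finally show "\<delta> * C \<le> Psi t b (y + 1) - Psi t b y" .
  qed
qed

end




lemma part_facts:
  assumes lam: "lam \<in> partitions_le n"
  shows "part_length lam \<le> n \<and> (\<forall>i. 1 \<le> i \<longrightarrow> (lam i \<noteq> 0 \<longleftrightarrow> i \<le> part_length lam))"
proof -
  define S where "S = {i. 1 \<le> i \<and> lam i \<noteq> 0}"
  have mono: "\<And>i j. 1 \<le> i \<Longrightarrow> i \<le> j \<Longrightarrow> lam j \<le> lam i"
    and zero: "\<And>i. n < i \<Longrightarrow> lam i = 0" using lam unfolding partitions_le_def by auto
  have Ssub: "S \<subseteq> {1..n}" unfolding S_def using zero by (auto simp: not_less[symmetric])
  then have fin: "finite S" by (rule finite_subset) simp
  define m where "m = Max (insert 0 S)"
  have mem: "1 \<le> i \<Longrightarrow> i \<in> S \<longleftrightarrow> i \<le> m" for i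
  proof
    assume "i \<in> S" then show "i \<le> m" unfolding m_def using fin by simp
  next
    assume i: "1 \<le> i" "i \<le> m"
    have "m \<in> insert 0 S" unfolding m_def using fin by (intro Max_in) auto
    then have "m \<in> S" using i by auto
    then have "lam m \<noteq> 0" unfolding S_def by auto
    moreover have "lam m \<le> lam i" using mono i by auto
    ultimately show "i \<in> S" unfolding S_def using i by auto
  qed
  have "S = {1..m}" using mem unfolding S_def by auto
  then have card: "part_length lam = m" unfolding part_length_def S_def[symmetric] by simp
  have "m \<le> n"
  proof -
    have "m \<in> insert 0 S" unfolding m_def using fin by (intro Max_in) auto
    then show ?thesis using Ssub by auto
  qed
  then show ?thesis using mem card unfolding S_def by auto
qed

definition bb :: "real \<Rightarrow> (nat \<Rightarrow> nat) \<Rightarrow> nat \<Rightarrow> real" where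
  "bb q lam k = (if k < part_length lam then q ^ lam (part_length lam - k) else 0)"

lemma bb_bounds:
  assumes lam: "lam \<in> partitions_le n" and q: "0 \<le> q" "q \<le> 1"
  shows "0 \<le> bb q lam k \<and> bb q lam k \<le> q"
proof (cases "k < part_length lam")
  case True
  have "lam (part_length lam - k) \<noteq> 0" using part_facts[OF lam] True by auto
  then have "q ^ lam (part_length lam - k) \<le> q ^ 1"
    by (intro power_decreasing q) auto
  then show ?thesis using True q unfolding bb_def by auto
qed (use q in \<open>auto simp: bb_def\<close>)

lemma phi_Psi:
  assumes t: "0 < t" "t < 1" and q: "0 \<le> q" "q \<le> 1" and lam: "lam \<in> partitions_le n"
  shows "phi q t n x lam = Psi t (bb q lam) (real n - real (part_length lam) + x)"
proof -
  define l where "l = part_length lam"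
  define m where "m = n - l"
  have pf: "l \<le> n" "\<And>i. 1 \<le> i \<Longrightarrow> lam i \<noteq> 0 \<longleftrightarrow> i \<le> l" using part_facts[OF lam] unfolding l_def by auto
  define c where "c j = (if j < n then q ^ lam (n - j) else 0)" for j
  have c01: "0 \<le> c j \<and> c j \<le> 1" for j unfolding c_def using q by (auto intro: power_le_one)
  define f where "f j = hh t (c j) (real j + x)" for j
  have phi_eq: "phi q t n x lam = prodinf f"
    unfolding phi_def f_def hh_def c_def by simp
  have conv: "convergent_prod f" unfolding f_def using Psi_conv[OF t, of c x] c01 by auto
  have nz: "f i \<noteq> 0" for i
  proof -
    have "0 < f i" unfolding f_def using hh_pos[OF t(1)] c01 by auto
    then show ?thesis by simp
  qed
  have split: "prodinf f = (\<Prod>i. f (i + m)) * (\<Prod>i<m. f i)"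
    by (rule prodinf_split_initial_segment[OF conv]) (use nz in auto)
  have one: "(\<Prod>i<m. f i) = 1"
  proof (rule prod.neutral, intro ballI)
    fix i assume "i \<in> {..<m}"
    then have i: "i < m" by simp
    then have "i < n" "\<not> n - i \<le> l" unfolding m_def using pf by auto
    then have "lam (n - i) = 0" using pf(2)[of "n - i"] by auto
    then have "c i = 1" unfolding c_def using \<open>i < n\<close> by simp
    then show "f i = 1" unfolding f_def using hh_one[OF t(1)] by simp
  qed
  have shift: "f (i + m) = hh t (bb q lam i) (real i + (real n - real l + x))" for i
  proof -
    have "c (i + m) = bb q lam i"
      unfolding c_def bb_def l_def[symmetric] m_def using pf by (auto simp: Suc_diff_le)
    moreover have "real (i + m) + x = real i + (real n - real l + x)"
      unfolding m_def using pf by (simp add: of_nat_diff)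
    ultimately show ?thesis unfolding f_def by (simp add: add.assoc)
  qed
  show ?thesis unfolding phi_eq split one Psi_def shift l_def by simp
qed




lemma pmf_integrable_bounded:
  assumes "\<And>w. w \<in> set_pmf p \<Longrightarrow> \<bar>f w\<bar> \<le> B"
  shows "integrable (measure_pmf p) (f :: 'a \<Rightarrow> real)"
  by (rule measure_pmf.integrable_const_bound[where B=B]) (auto intro!: AE_pmfI simp: assms)

lemma pmf_int_mono:
  assumes "integrable (measure_pmf p) f" "integrable (measure_pmf p) g"
    "\<And>w. w \<in> set_pmf p \<Longrightarrow> f w \<le> (g w :: real)"
  shows "measure_pmf.expectation p f \<le> measure_pmf.expectation p g"
  by (rule integral_mono_AE) (auto intro!: AE_pmfI assms)

lemma pmf_int_indicator: "measure_pmf.expectation p (indicator A) = measure_pmf.prob p A"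
  by simp

lemma pmf_int_const: "measure_pmf.expectation p (\<lambda>w. c) = (c::real)"
  by simp

lemma pmf_indicator_integrable: "integrable (measure_pmf p) (indicator A :: 'a \<Rightarrow> real)"
  by (rule pmf_integrable_bounded[where B=1]) (auto simp: indicator_def)

lemma win_bound:
  assumes S: "\<And>a. measure_pmf.prob p {w. a < Xf w \<and> Xf w \<le> a + 1} \<le> S"
  shows "measure_pmf.prob p {w. a < Xf w \<and> Xf w \<le> a + real k} \<le> real k * S"
proof (induction k)
  case 0
  have e: "{w. a < Xf w \<and> Xf w \<le> a} = {}" by auto
  show ?case by (simp add: e)
next
  case (Suc k)
  have "{w. a < Xf w \<and> Xf w \<le> a + real (Suc k)} \<subseteq>
        {w. a < Xf w \<and> Xf w \<le> a + real k} \<union> {w. a + real k < Xf w \<and> Xf w \<le> a + real k + 1}"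
    by auto
  then have "measure_pmf.prob p {w. a < Xf w \<and> Xf w \<le> a + real (Suc k)} \<le>
        measure_pmf.prob p ({w. a < Xf w \<and> Xf w \<le> a + real k} \<union> {w. a + real k < Xf w \<and> Xf w \<le> a + real k + 1})"
    by (intro measure_pmf.finite_measure_mono) auto
  also have "\<dots> \<le> measure_pmf.prob p {w. a < Xf w \<and> Xf w \<le> a + real k} +
       measure_pmf.prob p {w. a + real k < Xf w \<and> Xf w \<le> a + real k + 1}"
    by (intro measure_subadditive) (auto simp: measure_pmf.emeasure_eq_measure)
  also have "\<dots> \<le> real k * S + S" using Suc.IH S[of "a + real k"] by linarith
  finally show ?case by (simp add: algebra_simps)
qed




lemma abstract_equiv:
  fixes P :: "nat \<Rightarrow> 'a pmf" and X :: "nat \<Rightarrow> 'a \<Rightarrow> real"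
    and ph :: "nat \<Rightarrow> real \<Rightarrow> 'a \<Rightarrow> real" and Om :: "nat \<Rightarrow> 'a set"
  assumes supp: "\<And>n. 1 \<le> n \<Longrightarrow> set_pmf (P n) \<subseteq> Om n"
  and c1: "\<And>n x y w. 1 \<le> n \<Longrightarrow> w \<in> Om n \<Longrightarrow> x \<le> y \<Longrightarrow>
             0 \<le> ph n x w \<and> ph n x w \<le> ph n y w \<and> ph n y w \<le> 1"
  and c2: "\<And>\<epsilon>. \<epsilon> > 0 \<Longrightarrow> \<exists>M. \<forall>n x w. 1 \<le> n \<longrightarrow> w \<in> Om n \<longrightarrow> X n w - x > M \<longrightarrow> ph n x w < \<epsilon>"
  and c3: "\<And>\<epsilon>. \<epsilon> > 0 \<Longrightarrow> \<exists>M. \<forall>n x w. 1 \<le> n \<longrightarrow> w \<in> Om n \<longrightarrow> X n w - x < - M \<longrightarrow> ph n x w > 1 - \<epsilon>"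
  and c4: "c > 0" "\<And>n x w. 1 \<le> n \<Longrightarrow> w \<in> Om n \<Longrightarrow> x < X n w \<Longrightarrow> X n w \<le> x + 1 \<Longrightarrow>
             ph n (x + 1) w - ph n x w \<ge> c"
  and bd: "\<And>n. 1 \<le> n \<Longrightarrow> \<exists>B. \<forall>w \<in> Om n. B \<le> X n w"
  shows "asymp_equivalent P X (\<lambda>n x. measure_pmf.expectation (P n) (ph n x))"
proof -
  define F where "F n x = measure_pmf.expectation (P n) (ph n x)" for n x
  define W where "W n x = measure_pmf.prob (P n) {w. x < X n w \<and> X n w \<le> x + 1}" for n x
  define S where "S n = (SUP x::real. W n x)" for n
  define SF where "SF n = (SUP x::real. F n (x + 1) - F n x)" for n
  define D where "D n = (SUP x::real. measure_pmf.prob (P n) {w. X n w \<le> x} - F n x)" for n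
  have ph01: "0 \<le> ph n x w \<and> ph n x w \<le> 1" if "1 \<le> n" "w \<in> set_pmf (P n)" for n x w
    using c1[of n w x x] that supp by auto
  have int_ph: "integrable (measure_pmf (P n)) (ph n x)" if "1 \<le> n" for n x
    by (rule pmf_integrable_bounded[where B=1]) (use ph01 that in auto)
  have F01: "0 \<le> F n x \<and> F n x \<le> 1" if "1 \<le> n" for n x
  proof
    show "0 \<le> F n x" unfolding F_def by (rule integral_nonneg_AE) (use ph01 that in \<open>auto intro!: AE_pmfI\<close>)
    have "F n x \<le> measure_pmf.expectation (P n) (\<lambda>w. 1)" unfolding F_def
      by (rule pmf_int_mono[OF int_ph[OF that]]) (use ph01 that in auto)
    then show "F n x \<le> 1" by simp
  qed
  have Fmono: "F n x \<le> F n y" if "1 \<le> n" "x \<le> y" for n x y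
  proof -
    have "ph n x w \<le> ph n y w" if "w \<in> set_pmf (P n)" for w
      using c1[of n w x y] supp[of n] \<open>1 \<le> n\<close> \<open>x \<le> y\<close> that by auto
    then show ?thesis unfolding F_def by (intro pmf_int_mono int_ph \<open>1 \<le> n\<close>) auto
  qed
  have W01: "0 \<le> W n x \<and> W n x \<le> 1" for n x unfolding W_def by simp
  have bddW: "bdd_above (range (W n))" for n using W01 by (intro bdd_aboveI2[where M=1]) auto
  have WS: "W n x \<le> S n" for n x unfolding S_def by (rule cSUP_upper[OF _ bddW]) simp
  have S0: "0 \<le> S n" for n using WS[of n 0] W01[of n 0] by linarith
  have win: "measure_pmf.prob (P n) {w. a < X n w \<and> X n w \<le> a + real k} \<le> real k * S n" for n a k
    by (rule win_bound) (use WS in \<open>auto simp: W_def\<close>)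

  have FtoS: "SF \<longlonglongrightarrow> 0 \<Longrightarrow> S \<longlonglongrightarrow> 0"
  proof -
    assume SF: "SF \<longlonglongrightarrow> 0"
    have "S n \<le> SF n / c" if n: "1 \<le> n" for n
    proof -
      have bddF: "bdd_above (range (\<lambda>x. F n (x + 1) - F n x))"
        using F01[OF n] by (intro bdd_aboveI2[where M=1]) (smt (verit))
      have "W n x \<le> SF n / c" for x
      proof -
        let ?A = "{w. x < X n w \<and> X n w \<le> x + 1}"
        have "c * W n x = measure_pmf.expectation (P n) (\<lambda>w. c * indicator ?A w)"
          unfolding W_def by simp
        also have "\<dots> \<le> measure_pmf.expectation (P n) (\<lambda>w. ph n (x + 1) w - ph n x w)"
        proof (rule pmf_int_mono)
          show "integrable (measure_pmf (P n)) (\<lambda>w. c * indicator ?A w)"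
            by (simp add: pmf_indicator_integrable)
          show "integrable (measure_pmf (P n)) (\<lambda>w. ph n (x + 1) w - ph n x w)"
            using int_ph[OF n] by simp
          fix w assume w: "w \<in> set_pmf (P n)"
          then have wO: "w \<in> Om n" using supp n by auto
          show "c * indicator ?A w \<le> ph n (x + 1) w - ph n x w"
          proof (cases "w \<in> ?A")
            case True then show ?thesis using c4(2)[OF n wO] by auto
          next
            case False then show ?thesis using c1[OF n wO, of x "x + 1"] by auto
          qed
        qed
        also have "\<dots> = F n (x + 1) - F n x" unfolding F_def using int_ph[OF n] by simp
        also have "\<dots> \<le> SF n" unfolding SF_def by (rule cSUP_upper[OF _ bddF]) simp
        finally show ?thesis using c4(1) by (simp add: field_simps mult.commute)
      qed
      then show ?thesis unfolding S_def by (intro cSUP_least) auto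
    qed
    then have ev: "eventually (\<lambda>n. S n \<le> SF n / c) sequentially"
      by (auto simp: eventually_sequentially)
    have lim: "(\<lambda>n. SF n / c) \<longlonglongrightarrow> 0" using tendsto_divide[OF SF tendsto_const, of c] c4(1) by simp
    show "S \<longlonglongrightarrow> 0"
      by (rule tendsto_sandwich[OF _ ev tendsto_const lim]) (use S0 in auto)
  qed

  have StoF: "S \<longlonglongrightarrow> 0 \<Longrightarrow> SF \<longlonglongrightarrow> 0"
  proof -
    assume Sl: "S \<longlonglongrightarrow> 0"
    show "SF \<longlonglongrightarrow> 0"
    proof (rule LIMSEQ_I)
      fix r :: real assume r: "0 < r"
      define \<epsilon> where "\<epsilon> = r / 3"
      have e: "\<epsilon> > 0" using r by (simp add: \<epsilon>_def)
      obtain M1 where M1: "\<forall>n x w. 1 \<le> n \<longrightarrow> w \<in> Om n \<longrightarrow> X n w - x > M1 \<longrightarrow> ph n x w < \<epsilon>"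
        using c2[OF e] by blast
      obtain M2 where M2: "\<forall>n x w. 1 \<le> n \<longrightarrow> w \<in> Om n \<longrightarrow> X n w - x < - M2 \<longrightarrow> ph n x w > 1 - \<epsilon>"
        using c3[OF e] by blast
      define N where "N = nat \<lceil>max M1 M2\<rceil>"
      have N: "M1 \<le> real N" "M2 \<le> real N" unfolding N_def by linarith+
      have "\<epsilon> / (2 * real N + 2) > 0" using e by simp
      then obtain n0 where n0: "\<forall>n\<ge>n0. norm (S n - 0) < \<epsilon> / (2 * real N + 2)"
        using LIMSEQ_D[OF Sl] by blast
      show "\<exists>no. \<forall>n\<ge>no. norm (SF n - 0) < r"
      proof (intro exI allI impI)
        fix n assume "max n0 1 \<le> n"
        then have n: "1 \<le> n" and nn0: "n \<ge> n0" by auto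
        have "norm (S n - 0) < \<epsilon> / (2 * real N + 2)" using n0 nn0 by blast
        then have "S n < \<epsilon> / (2 * real N + 2)" using S0[of n] by simp
        then have Sn: "(2 * real N + 2) * S n < \<epsilon>"
          by (simp add: field_simps)
        have bnd: "F n (x + 1) - F n x \<le> \<epsilon> + (2 * real N + 2) * S n" for x
        proof -
          let ?a = "x - real N - 1"
          let ?A = "{w. ?a < X n w \<and> X n w \<le> ?a + real (2 * N + 2)}"
          have "F n (x + 1) - F n x = measure_pmf.expectation (P n) (\<lambda>w. ph n (x + 1) w - ph n x w)"
            unfolding F_def using int_ph[OF n] by simp
          also have "\<dots> \<le> measure_pmf.expectation (P n) (\<lambda>w. \<epsilon> + indicator ?A w)"
          proof (rule pmf_int_mono)
            show "integrable (measure_pmf (P n)) (\<lambda>w. \<epsilon> + indicator ?A w)"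
              by (simp add: pmf_indicator_integrable)
            show "integrable (measure_pmf (P n)) (\<lambda>w. ph n (x + 1) w - ph n x w)"
              using int_ph[OF n] by simp
            fix w assume w: "w \<in> set_pmf (P n)"
            then have wO: "w \<in> Om n" using supp n by auto
            have p: "0 \<le> ph n x w" "ph n x w \<le> ph n (x+1) w" "ph n (x+1) w \<le> 1"
              using c1[OF n wO, of x "x + 1"] by auto
            show "ph n (x + 1) w - ph n x w \<le> \<epsilon> + indicator ?A w"
            proof (cases "X n w - x > real N + 1")
              case True
              then have "X n w - (x + 1) > M1" using N by linarith
              then have "ph n (x + 1) w < \<epsilon>" using M1 n wO by blast
              then show ?thesis using p by (simp add: indicator_def)
            next
              case False
              show ?thesis
              proof (cases "X n w - x < - real N")
                case True
                then have "X n w - x < - M2" using N by linarith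
                then have "ph n x w > 1 - \<epsilon>" using M2 n wO by blast
                then show ?thesis using p by (simp add: indicator_def)
              next
                case False2: False
                then have "w \<in> ?A" using False by auto
                then show ?thesis using p e by simp
              qed
            qed
          qed
          also have "\<dots> = \<epsilon> + measure_pmf.prob (P n) ?A"
            by (simp add: pmf_indicator_integrable)
          also have "\<dots> \<le> \<epsilon> + (2 * real N + 2) * S n"
            using win[of n ?a "2 * N + 2"] by (simp add: add.commute)
          finally show ?thesis .
        qed
        have up: "SF n \<le> \<epsilon> + (2 * real N + 2) * S n" unfolding SF_def
          by (rule cSUP_least) (use bnd in auto)
        have lo: "0 \<le> SF n"
        proof -
          have bddF: "bdd_above (range (\<lambda>x. F n (x + 1) - F n x))"
            using bnd by (intro bdd_aboveI2) auto
          have "0 \<le> F n (0 + 1) - F n 0" using Fmono[OF n, of 0 "0 + 1"] by simp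
          also have "\<dots> \<le> SF n" unfolding SF_def by (rule cSUP_upper[OF _ bddF]) simp
          finally show ?thesis .
        qed
        show "norm (SF n - 0) < r" using up lo Sn e unfolding \<epsilon>_def by simp
      qed
    qed
  qed

  have StoD: "S \<longlonglongrightarrow> 0 \<Longrightarrow> D \<longlonglongrightarrow> 0"
  proof -
    assume Sl: "S \<longlonglongrightarrow> 0"
    show "D \<longlonglongrightarrow> 0"
    proof (rule LIMSEQ_I)
      fix r :: real assume r: "0 < r"
      define \<epsilon> where "\<epsilon> = r / 3"
      have e: "\<epsilon> > 0" using r by (simp add: \<epsilon>_def)
      obtain M1 where M1: "\<forall>n x w. 1 \<le> n \<longrightarrow> w \<in> Om n \<longrightarrow> X n w - x > M1 \<longrightarrow> ph n x w < \<epsilon>"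
        using c2[OF e] by blast
      obtain M2 where M2: "\<forall>n x w. 1 \<le> n \<longrightarrow> w \<in> Om n \<longrightarrow> X n w - x < - M2 \<longrightarrow> ph n x w > 1 - \<epsilon>"
        using c3[OF e] by blast
      define N where "N = nat \<lceil>M2\<rceil>"
      have N: "M2 \<le> real N" unfolding N_def by linarith
      have "\<epsilon> / (real N + 1) > 0" using e by simp
      then obtain n0 where n0: "\<forall>n\<ge>n0. norm (S n - 0) < \<epsilon> / (real N + 1)"
        using LIMSEQ_D[OF Sl] by blast
      show "\<exists>no. \<forall>n\<ge>no. norm (D n - 0) < r"
      proof (intro exI allI impI)
        fix n assume "max n0 1 \<le> n"
        then have n: "1 \<le> n" and nn0: "n \<ge> n0" by auto
        have "norm (S n - 0) < \<epsilon> / (real N + 1)" using n0 nn0 by blast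
        then have "S n < \<epsilon> / (real N + 1)" using S0[of n] by simp
        then have Sn: "(real N + 1) * S n < \<epsilon>"
          by (simp add: field_simps)
        have eqG: "measure_pmf.prob (P n) {w. X n w \<le> x} - F n x =
            measure_pmf.expectation (P n) (\<lambda>w. indicator {w. X n w \<le> x} w - ph n x w)" for x
          unfolding F_def using int_ph[OF n] by (simp add: pmf_indicator_integrable)
        have intG: "integrable (measure_pmf (P n)) (\<lambda>w. indicator {w. X n w \<le> x} w - ph n x w)" for x
          using int_ph[OF n] by (simp add: pmf_indicator_integrable)
        have bnd: "measure_pmf.prob (P n) {w. X n w \<le> x} - F n x \<le> \<epsilon> + (real N + 1) * S n" for x
        proof -
          let ?a = "x - real N - 1"
          let ?A = "{w. ?a < X n w \<and> X n w \<le> ?a + real (N + 1)}"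
          have "measure_pmf.prob (P n) {w. X n w \<le> x} - F n x \<le>
                measure_pmf.expectation (P n) (\<lambda>w. \<epsilon> + indicator ?A w)"
            unfolding eqG
          proof (rule pmf_int_mono[OF intG])
            show "integrable (measure_pmf (P n)) (\<lambda>w. \<epsilon> + indicator ?A w)"
              by (simp add: pmf_indicator_integrable)
            fix w assume w: "w \<in> set_pmf (P n)"
            then have wO: "w \<in> Om n" using supp n by auto
            have p: "0 \<le> ph n x w" "ph n x w \<le> 1"
              using c1[OF n wO, of x x] by auto
            show "indicator {w. X n w \<le> x} w - ph n x w \<le> \<epsilon> + indicator ?A w"
            proof (cases "X n w > x")
              case True
              then show ?thesis using p e by (simp add: indicator_def)
            next
              case False
              show ?thesis
              proof (cases "X n w - x < - real N")
                case True
                then have "X n w - x < - M2" using N by linarith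
                then have "ph n x w > 1 - \<epsilon>" using M2 n wO by blast
                then show ?thesis using p by (simp add: indicator_def)
              next
                case False2: False
                then have "w \<in> ?A" using False by auto
                then show ?thesis using p e by (simp add: indicator_def)
              qed
            qed
          qed
          also have "\<dots> = \<epsilon> + measure_pmf.prob (P n) ?A"
            by (simp add: pmf_indicator_integrable)
          also have "\<dots> \<le> \<epsilon> + (real N + 1) * S n"
            using win[of n ?a "N + 1"] by (simp add: add.commute)
          finally show ?thesis .
        qed
        have up: "D n \<le> \<epsilon> + (real N + 1) * S n" unfolding D_def
          by (rule cSUP_least) (use bnd in auto)
        have lo: "- \<epsilon> \<le> D n"
        proof -
          have bddG: "bdd_above (range (\<lambda>x. measure_pmf.prob (P n) {w. X n w \<le> x} - F n x))"
            using bnd by (intro bdd_aboveI2) auto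
          obtain B where B: "\<forall>w\<in>Om n. B \<le> X n w" using bd[OF n] by blast
          define x0 where "x0 = B - \<bar>M1\<bar> - 1"
          have "- \<epsilon> = measure_pmf.expectation (P n) (\<lambda>w. - \<epsilon>)" by simp
          also have "\<dots> \<le> measure_pmf.expectation (P n) (\<lambda>w. indicator {w. X n w \<le> x0} w - ph n x0 w)"
          proof (rule pmf_int_mono[OF _ intG])
            show "integrable (measure_pmf (P n)) (\<lambda>w. - \<epsilon>)" by simp
            fix w assume w: "w \<in> set_pmf (P n)"
            then have wO: "w \<in> Om n" using supp n by auto
            have "X n w - x0 > M1" using B wO unfolding x0_def by fastforce
            then have "ph n x0 w < \<epsilon>" using M1 n wO by blast
            moreover have "\<not> X n w \<le> x0" using B wO unfolding x0_def by fastforce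
            ultimately show "- \<epsilon> \<le> indicator {w. X n w \<le> x0} w - ph n x0 w"
              by (simp add: indicator_def)
          qed
          also have "\<dots> = measure_pmf.prob (P n) {w. X n w \<le> x0} - F n x0" using eqG by simp
          also have "\<dots> \<le> D n" unfolding D_def by (rule cSUP_upper[OF _ bddG]) simp
          finally show ?thesis .
        qed
        show "norm (D n - 0) < r" using up lo Sn e unfolding \<epsilon>_def by simp
      qed
    qed
  qed

  have sr: "spreads_rv P X \<longleftrightarrow> S \<longlonglongrightarrow> 0" unfolding spreads_rv_def S_def W_def by simp
  have sf: "spreads_fun (\<lambda>n x. measure_pmf.expectation (P n) (ph n x)) \<longleftrightarrow> SF \<longlonglongrightarrow> 0"
    unfolding spreads_fun_def SF_def F_def by simp
  have dd: "(\<lambda>n. SUP x::real. measure_pmf.prob (P n) {w. X n w \<le> x} -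
              measure_pmf.expectation (P n) (ph n x)) = D"
    unfolding D_def F_def by simp
  show ?thesis unfolding asymp_equivalent_def sr sf dd using FtoS StoF StoD by blast
qed




theorem proposition5p6:
  fixes q t :: real and P :: "nat \<Rightarrow> (nat \<Rightarrow> nat) pmf"
  assumes "0 \<le> q" "q < 1" "0 < t" "t < 1"
    and "\<And>n. 1 \<le> n \<Longrightarrow> set_pmf (P n) \<subseteq> partitions_le n"
  shows "(\<forall>n x y lam. 1 \<le> n \<longrightarrow> lam \<in> partitions_le n \<longrightarrow> x \<le> y \<longrightarrow>
            0 \<le> phi q t n x lam \<and> phi q t n x lam \<le> phi q t n y lam \<and> phi q t n y lam \<le> 1)
       \<and> (\<forall>\<epsilon>>0. \<exists>M. \<forall>n x lam. 1 \<le> n \<longrightarrow> lam \<in> partitions_le n \<longrightarrow>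
            eta n lam - x > M \<longrightarrow> phi q t n x lam < \<epsilon>)
       \<and> (\<forall>\<epsilon>>0. \<exists>M. \<forall>n x lam. 1 \<le> n \<longrightarrow> lam \<in> partitions_le n \<longrightarrow>
            eta n lam - x < - M \<longrightarrow> phi q t n x lam > 1 - \<epsilon>)
       \<and> (\<exists>c>0. \<forall>n x lam. 1 \<le> n \<longrightarrow> lam \<in> partitions_le n \<longrightarrow>
            x < eta n lam \<longrightarrow> eta n lam \<le> x + 1 \<longrightarrow> phi q t n (x + 1) lam - phi q t n x lam \<ge> c)
       \<and> asymp_equivalent P eta
           (\<lambda>n x. measure_pmf.expectation (P n) (\<lambda>lam. phi q t n x lam))"
proof -
  note q = assms(1,2) and t = assms(3,4) and supp = assms(5)
  have q1: "q \<le> 1" using q by simp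
  have key: "phi q t n x lam = Psi t (bb q lam) (x - eta n lam)" if "lam \<in> partitions_le n" for n x lam
    using phi_Psi[OF t q(1) q1 that, of x] unfolding eta_def by (simp add: algebra_simps)
  have bq: "\<forall>k. 0 \<le> bb q lam k \<and> bb q lam k \<le> q" if "lam \<in> partitions_le n" for n lam
    using bb_bounds[OF that q(1) q1] by blast
  have b1: "\<And>k. 0 \<le> bb q lam k \<and> bb q lam k \<le> 1" if "lam \<in> partitions_le n" for n lam
    using bq[OF that] q1 by (meson order_trans)
  have C1: "\<forall>n x y lam. 1 \<le> n \<longrightarrow> lam \<in> partitions_le n \<longrightarrow> x \<le> y \<longrightarrow>
            0 \<le> phi q t n x lam \<and> phi q t n x lam \<le> phi q t n y lam \<and> phi q t n y lam \<le> 1"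
  proof (intro allI impI)
    fix n :: nat and x y :: real and lam assume "1 \<le> n" and lam: "lam \<in> partitions_le n" and "x \<le> y"
    then show "0 \<le> phi q t n x lam \<and> phi q t n x lam \<le> phi q t n y lam \<and> phi q t n y lam \<le> 1"
      unfolding key[OF lam]
      using Psi_nonneg[OF t b1[OF lam]] Psi_le1[OF t b1[OF lam]] Psi_mono[OF t b1[OF lam]] by simp
  qed
  have C2: "\<forall>\<epsilon>>0. \<exists>M. \<forall>n x lam. 1 \<le> n \<longrightarrow> lam \<in> partitions_le n \<longrightarrow>
            eta n lam - x > M \<longrightarrow> phi q t n x lam < \<epsilon>"
  proof (intro allI impI)
    fix \<epsilon> :: real assume e: "\<epsilon> > 0"
    obtain M where M: "\<forall>b y. (\<forall>k. 0 \<le> b k \<and> b k \<le> q) \<longrightarrow> y < - M \<longrightarrow> Psi t b y < \<epsilon>"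
      using Psi_small[OF t q e] by blast
    show "\<exists>M. \<forall>n x lam. 1 \<le> n \<longrightarrow> lam \<in> partitions_le n \<longrightarrow> eta n lam - x > M \<longrightarrow> phi q t n x lam < \<epsilon>"
    proof (intro exI allI impI)
      fix n :: nat and x :: real and lam assume "1 \<le> n" and lam: "lam \<in> partitions_le n" and "eta n lam - x > M"
      then show "phi q t n x lam < \<epsilon>" unfolding key[OF lam] using M bq[OF lam] by auto
    qed
  qed
  have C3: "\<forall>\<epsilon>>0. \<exists>M. \<forall>n x lam. 1 \<le> n \<longrightarrow> lam \<in> partitions_le n \<longrightarrow>
            eta n lam - x < - M \<longrightarrow> phi q t n x lam > 1 - \<epsilon>"
  proof (intro allI impI)
    fix \<epsilon> :: real assume e: "\<epsilon> > 0"
    obtain M where M: "\<forall>b y. (\<forall>k. 0 \<le> b k \<and> b k \<le> 1) \<longrightarrow> y > M \<longrightarrow> Psi t b y > 1 - \<epsilon>"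
      using Psi_big[OF t e] by blast
    show "\<exists>M. \<forall>n x lam. 1 \<le> n \<longrightarrow> lam \<in> partitions_le n \<longrightarrow> eta n lam - x < - M \<longrightarrow> phi q t n x lam > 1 - \<epsilon>"
    proof (intro exI allI impI)
      fix n :: nat and x :: real and lam assume "1 \<le> n" and lam: "lam \<in> partitions_le n" and "eta n lam - x < - M"
      then show "phi q t n x lam > 1 - \<epsilon>" unfolding key[OF lam] using M b1[OF lam] by auto
    qed
  qed
  obtain c where c: "c > 0" "\<forall>b y. (\<forall>k. 0 \<le> b k \<and> b k \<le> q) \<longrightarrow> -1 \<le> y \<longrightarrow> y < 0 \<longrightarrow>
           Psi t b (y + 1) - Psi t b y \<ge> c"
    using Psi_jump[OF t q] by blast
  have C4': "phi q t n (x + 1) lam - phi q t n x lam \<ge> c"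
    if "1 \<le> n" and lam: "lam \<in> partitions_le n" and "x < eta n lam" "eta n lam \<le> x + 1" for n x lam
  proof -
    have "Psi t (bb q lam) (x - eta n lam + 1) - Psi t (bb q lam) (x - eta n lam) \<ge> c"
      using c(2) bq[OF lam] that by auto
    moreover have "x + 1 - eta n lam = x - eta n lam + 1" by simp
    ultimately show ?thesis unfolding key[OF lam] by metis
  qed
  have C4: "\<exists>c>0. \<forall>n x lam. 1 \<le> n \<longrightarrow> lam \<in> partitions_le n \<longrightarrow>
            x < eta n lam \<longrightarrow> eta n lam \<le> x + 1 \<longrightarrow> phi q t n (x + 1) lam - phi q t n x lam \<ge> c"
    using C4' c(1) by blast
  have C5: "asymp_equivalent P eta (\<lambda>n x. measure_pmf.expectation (P n) (\<lambda>lam. phi q t n x lam))"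
  proof (rule abstract_equiv[where Om = partitions_le and c = c])
    show "\<And>n. 1 \<le> n \<Longrightarrow> set_pmf (P n) \<subseteq> partitions_le n" by (rule supp)
    show "\<And>n x y w. 1 \<le> n \<Longrightarrow> w \<in> partitions_le n \<Longrightarrow> x \<le> y \<Longrightarrow>
             0 \<le> phi q t n x w \<and> phi q t n x w \<le> phi q t n y w \<and> phi q t n y w \<le> 1"
      using C1 by blast
    show "\<And>\<epsilon>. \<epsilon> > 0 \<Longrightarrow> \<exists>M. \<forall>n x w. 1 \<le> n \<longrightarrow> w \<in> partitions_le n \<longrightarrow> eta n w - x > M \<longrightarrow> phi q t n x w < \<epsilon>"
      using C2 by blast
    show "\<And>\<epsilon>. \<epsilon> > 0 \<Longrightarrow> \<exists>M. \<forall>n x w. 1 \<le> n \<longrightarrow> w \<in> partitions_le n \<longrightarrow> eta n w - x < - M \<longrightarrow> phi q t n x w > 1 - \<epsilon>"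
      using C3 by blast
    show "c > 0" by (rule c(1))
    show "\<And>n x w. 1 \<le> n \<Longrightarrow> w \<in> partitions_le n \<Longrightarrow> x < eta n w \<Longrightarrow> eta n w \<le> x + 1 \<Longrightarrow>
             phi q t n (x + 1) w - phi q t n x w \<ge> c"
      by (rule C4')
    show "\<exists>B. \<forall>w \<in> partitions_le n. B \<le> eta n w" if "1 \<le> n" for n :: nat
      by (rule exI[where x="- real n"]) (auto simp: eta_def)
  qed
  show ?thesis using C1 C2 C3 C4 C5 by blast
qed



end
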